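(* Let $\theta_1,\dots,\theta_{10}$ be real numbers such that $0<\theta_i<\theta_j<\theta_k<180$ for each of the triples $(i,j,k)\in\{(2,4,6),(1,5,9),(1,5,10),(1,5,7),(1,3,7),(1,4,7),(3,5,8),(2,8,9),(6,7,10)\}$, and write $s_{ij}=\sin(\theta_j-\theta_i)$. Suppose $$s_{89}\,s_{1,10}\,s_{24}\,s_{35}\,s_{67}+s_{46}\,s_{19}\,s_{7,10}\,s_{35}\,s_{28}-s_{46}\,s_{38}\,s_{7,10}\,s_{29}\,s_{15}<0 .$$ Then there is no $\mathbf r=(r_1,\dots,r_{10})\in\mathbb{R}^{10}$ satisfying simultaneously the nine strict inequalities $$r_is_{jk}-r_js_{ik}+r_ks_{ij}>0\quad\text{for }(i,j,k)\in\{(2,4,6),(1,5,9),(1,5,10),(1,5,7)\},$$ $$-r_is_{jk}+r_js_{ik}-r_ks_{ij}>0\quad\text{for }(i,j,k)\in\{(1,3,7),(1,4,7),(3,5,8),(2,8,9),(6,7,10)\}.$$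
   Context: Angles are in degrees. *)

theory Defs
  imports Complex_Main
begin

definition sind :: "real \<Rightarrow> real" where
  "sind x = sin (x * pi / 180)"

definition sdiff :: "(nat \<Rightarrow> real) \<Rightarrow> nat \<Rightarrow> nat \<Rightarrow> real" where
  "sdiff \<theta> i j = sind (\<theta> j - \<theta> i)"

end

theory Submission
  imports Defs
begin

lemma ident:
  fixes C S r :: "nat \<Rightarrow> real" and s :: "nat \<Rightarrow> nat \<Rightarrow> real"
  assumes sd: "\<And>i j. s i j = S j * C i - C j * S i"
  defines "L \<equiv> \<lambda>i j k. r i * s j k - r j * s i k + r k * s i j"
  defines "N \<equiv> s 8 9 * s 1 10 * s 2 4 * s 3 5 * s 6 7 + s 4 6 * s 1 9 * s 7 10 * s 3 5 * s 2 8 - s 4 6 * s 3 8 * s 7 10 * s 2 9 * s 1 5"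
  shows "(s 8 9*s 3 5*s 1 5*s 7 10*s 1 7) * L 2 4 6
   + (s 4 6*s 2 8*s 3 5*s 7 10*s 1 7) * L 1 5 9
   + (s 2 4*s 8 9*s 3 5*s 6 7*s 1 7) * L 1 5 10
   + (- N) * L 1 5 7
   + (s 4 6*s 2 9*s 1 5*s 7 10*s 5 8) * (- L 1 3 7)
   + (s 2 6*s 8 9*s 3 5*s 1 5*s 7 10) * (- L 1 4 7)
   + (s 4 6*s 2 9*s 1 5*s 7 10*s 1 7) * (- L 3 5 8)
   + (s 4 6*s 3 5*s 1 5*s 7 10*s 1 7) * (- L 2 8 9)
   + (s 2 4*s 8 9*s 3 5*s 1 5*s 1 7) * (- L 6 7 10) = 0"
  unfolding L_def N_def sd by algebra

theorem lemmal:
  fixes \<theta> :: "nat \<Rightarrow> real"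
  assumes ord: "\<forall>(i,j,k) \<in> {(2,4,6),(1,5,9),(1,5,10),(1,5,7),(1,3,7),(1,4,7),(3,5,8),(2,8,9),(6,7,10)}.
                 0 < \<theta> i \<and> \<theta> i < \<theta> j \<and> \<theta> j < \<theta> k \<and> \<theta> k < 180"
    and neg: "sdiff \<theta> 8 9 * sdiff \<theta> 1 10 * sdiff \<theta> 2 4 * sdiff \<theta> 3 5 * sdiff \<theta> 6 7
            + sdiff \<theta> 4 6 * sdiff \<theta> 1 9 * sdiff \<theta> 7 10 * sdiff \<theta> 3 5 * sdiff \<theta> 2 8
            - sdiff \<theta> 4 6 * sdiff \<theta> 3 8 * sdiff \<theta> 7 10 * sdiff \<theta> 2 9 * sdiff \<theta> 1 5 < 0"
  shows "\<not> (\<exists>r :: nat \<Rightarrow> real.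
            (\<forall>(i,j,k) \<in> {(2,4,6),(1,5,9),(1,5,10),(1,5,7)}.
               r i * sdiff \<theta> j k - r j * sdiff \<theta> i k + r k * sdiff \<theta> i j > 0) \<and>
            (\<forall>(i,j,k) \<in> {(1,3,7),(1,4,7),(3,5,8),(2,8,9),(6,7,10)}.
               - r i * sdiff \<theta> j k + r j * sdiff \<theta> i k - r k * sdiff \<theta> i j > 0))"
proof
  assume "\<exists>r :: nat \<Rightarrow> real.
            (\<forall>(i,j,k) \<in> {(2,4,6),(1,5,9),(1,5,10),(1,5,7)}.
               r i * sdiff \<theta> j k - r j * sdiff \<theta> i k + r k * sdiff \<theta> i j > 0) \<and>
            (\<forall>(i,j,k) \<in> {(1,3,7),(1,4,7),(3,5,8),(2,8,9),(6,7,10)}.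
               - r i * sdiff \<theta> j k + r j * sdiff \<theta> i k - r k * sdiff \<theta> i j > 0)"
  then obtain r where h1: "\<forall>(i,j,k) \<in> {(2,4,6),(1,5,9),(1,5,10),(1,5,7)}.
               r i * sdiff \<theta> j k - r j * sdiff \<theta> i k + r k * sdiff \<theta> i j > 0"
    and h2: "\<forall>(i,j,k) \<in> {(1,3,7),(1,4,7),(3,5,8),(2,8,9),(6,7,10)}.
               - r i * sdiff \<theta> j k + r j * sdiff \<theta> i k - r k * sdiff \<theta> i j > 0" by blast
  define s where "s = sdiff \<theta>"
  define L where "L = (\<lambda>i j k. r i * s j k - r j * s i k + r k * s i j)"
  define N where "N = s 8 9 * s 1 10 * s 2 4 * s 3 5 * s 6 7 + s 4 6 * s 1 9 * s 7 10 * s 3 5 * s 2 8 - s 4 6 * s 3 8 * s 7 10 * s 2 9 * s 1 5"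
  have sd: "\<And>i j. s i j = sin (\<theta> j * pi / 180) * cos (\<theta> i * pi / 180) - cos (\<theta> j * pi / 180) * sin (\<theta> i * pi / 180)"
    unfolding s_def sdiff_def sind_def by (simp add: left_diff_distrib diff_divide_distrib sin_diff)
  have pos: "s i j > 0" if "\<theta> i < \<theta> j" "0 < \<theta> i" "\<theta> j < 180" for i j
  proof -
    have "0 < (\<theta> j - \<theta> i) * pi / 180" using that by simp
    moreover have "(\<theta> j - \<theta> i) * pi / 180 < pi" using that pi_gt_zero
      by (simp add: divide_less_eq)
    ultimately show ?thesis unfolding s_def sdiff_def sind_def by (rule sin_gt_zero)
  qed
  have o: "0 < \<theta> 2 \<and> \<theta> 2 < \<theta> 4 \<and> \<theta> 4 < \<theta> 6 \<and> \<theta> 6 < 180"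
     "0 < \<theta> 1 \<and> \<theta> 1 < \<theta> 5 \<and> \<theta> 5 < \<theta> 9 \<and> \<theta> 9 < 180"
     "0 < \<theta> 1 \<and> \<theta> 1 < \<theta> 5 \<and> \<theta> 5 < \<theta> 10 \<and> \<theta> 10 < 180"
     "0 < \<theta> 1 \<and> \<theta> 1 < \<theta> 5 \<and> \<theta> 5 < \<theta> 7 \<and> \<theta> 7 < 180"
     "0 < \<theta> 1 \<and> \<theta> 1 < \<theta> 3 \<and> \<theta> 3 < \<theta> 7 \<and> \<theta> 7 < 180"
     "0 < \<theta> 1 \<and> \<theta> 1 < \<theta> 4 \<and> \<theta> 4 < \<theta> 7 \<and> \<theta> 7 < 180"
     "0 < \<theta> 3 \<and> \<theta> 3 < \<theta> 5 \<and> \<theta> 5 < \<theta> 8 \<and> \<theta> 8 < 180"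
     "0 < \<theta> 2 \<and> \<theta> 2 < \<theta> 8 \<and> \<theta> 8 < \<theta> 9 \<and> \<theta> 9 < 180"
     "0 < \<theta> 6 \<and> \<theta> 6 < \<theta> 7 \<and> \<theta> 7 < \<theta> 10 \<and> \<theta> 10 < 180"
    using ord by auto
  have p: "s 8 9 > 0" "s 3 5 > 0" "s 1 5 > 0" "s 7 10 > 0" "s 1 7 > 0" "s 4 6 > 0" "s 2 6 > 0"
    "s 2 4 > 0" "s 2 9 > 0" "s 5 8 > 0" "s 2 8 > 0" "s 6 7 > 0"
    using o by (auto intro!: pos)
  have Np: "- N > 0" using neg unfolding N_def s_def by simp
  have m: "L 2 4 6 > 0" "L 1 5 9 > 0" "L 1 5 10 > 0" "L 1 5 7 > 0"
    "- L 1 3 7 > 0" "- L 1 4 7 > 0" "- L 3 5 8 > 0" "- L 2 8 9 > 0" "- L 6 7 10 > 0"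
    using h1 h2 unfolding L_def s_def by auto
  have "(s 8 9*s 3 5*s 1 5*s 7 10*s 1 7) * L 2 4 6
   + (s 4 6*s 2 8*s 3 5*s 7 10*s 1 7) * L 1 5 9
   + (s 2 4*s 8 9*s 3 5*s 6 7*s 1 7) * L 1 5 10
   + (- N) * L 1 5 7
   + (s 4 6*s 2 9*s 1 5*s 7 10*s 5 8) * (- L 1 3 7)
   + (s 2 6*s 8 9*s 3 5*s 1 5*s 7 10) * (- L 1 4 7)
   + (s 4 6*s 2 9*s 1 5*s 7 10*s 1 7) * (- L 3 5 8)
   + (s 4 6*s 3 5*s 1 5*s 7 10*s 1 7) * (- L 2 8 9)
   + (s 2 4*s 8 9*s 3 5*s 1 5*s 1 7) * (- L 6 7 10) > 0"
    using p Np m by (intro add_pos_pos mult_pos_pos; simp)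
  moreover have "(s 8 9*s 3 5*s 1 5*s 7 10*s 1 7) * L 2 4 6
   + (s 4 6*s 2 8*s 3 5*s 7 10*s 1 7) * L 1 5 9
   + (s 2 4*s 8 9*s 3 5*s 6 7*s 1 7) * L 1 5 10
   + (- N) * L 1 5 7
   + (s 4 6*s 2 9*s 1 5*s 7 10*s 5 8) * (- L 1 3 7)
   + (s 2 6*s 8 9*s 3 5*s 1 5*s 7 10) * (- L 1 4 7)
   + (s 4 6*s 2 9*s 1 5*s 7 10*s 1 7) * (- L 3 5 8)
   + (s 4 6*s 3 5*s 1 5*s 7 10*s 1 7) * (- L 2 8 9)
   + (s 2 4*s 8 9*s 3 5*s 1 5*s 1 7) * (- L 6 7 10) = 0"
    unfolding L_def N_def by (rule ident[OF sd])
  ultimately show False by simp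
qed

end
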